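(* Let $(L,\le,(\sqsubseteq_\alpha)_{\alpha<\kappa})$ be a model of Axioms 1–4 with $\kappa$ a limit ordinal. Let $\alpha<\kappa$ and let $f:L\to L$ be $\alpha$-monotonic. Suppose $x\in L$ satisfies $x\sqsubseteq_\alpha f(x)$. Then there is $y\in L$ with the following properties: (1) $x\sqsubseteq_\alpha y$ and $y=_\alpha f(y)$; (2) for every $z\in L$, if $x\sqsubseteq_\alpha z$ and $f(z)\sqsubseteq_\alpha z$, then $y\sqsubseteq_\alpha z$; (3) $y$ is the $\le$-least element of $[y]_\alpha$; moreover $y\sqsubseteq_{\alpha+1}w$ for all $w\in[y]_\alpha$, and $y\sqsubseteq_{\alpha+1}f(y)$.
   Context: Setting (model of Axioms 1–4). Let $(L,\le)$ be a complete lattice with join operation $\bigvee$ and least element $\perp$. Let $\kappa>0$ be an ordinal, and for each ordinal $\alpha<\kappa$ let $\sqsubseteq_\alpha$ be a preorder on $L$. Derived relations: - $x=_\alpha y$ means $x\sqsubseteq_\alpha y$ and $y\sqsubseteq_\alpha x$. - $x\sqsubset_\alpha y$ means $x\sqsubseteq_\alpha y$ and not $x=_\alpha y$. Derived sets, for $x\in L$ and $\alpha<\kappa$: - $(x]_\alpha=\{y\in L:\forall\beta<\alpha,\ x=_\beta y\}$. - $[x]_\alpha=\{y\in L: x=_\alpha y\}$. For a set $X$, $X\sqsubseteq_\alpha y$ means $x\sqsubseteq_\alpha y$ for all $x\in X$. The structure is a model of Axioms 1–4 if: - (A1) for all $\alpha<\beta<\kappa$, $x\sqsubseteq_\beta y$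 implies $x=_\alpha y$; - (A2) $\bigcap_{\alpha<\kappa}=_\alpha$ is the identity relation on $L$; - (A3) for every $x\in L$, every $\alpha<\kappa$ and every $X\subseteq(x]_\alpha$ there is $y\in(x]_\alpha$ with $X\sqsubseteq_\alpha y$ such that for all $z\in(x]_\alpha$ with $X\sqsubseteq_\alpha z$ we have $y\sqsubseteq_\alpha z$ and $y\le z$; - (A4) for every nonempty $X\subseteq L$, every $\alpha<\kappa$ and every $y\in L$, if $y=_\alpha x$ for all $x\in X$ then $y=_\alpha\bigvee X$. A function $f:L\to L$ is $\alpha$-monotonic if $x\sqsubseteq_\alpha y$ implies $f(x)\sqsubseteq_\alpha f(y)$. *)

theory Defs
  imports Main
begin

text \<open>Ordinals below kappa are represented by the elements of a well-ordered
index type 'i (so kappa is the order type of 'i; kappa > 0 is automatic since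
types are nonempty). The family of preorders is R :: 'i => 'a => 'a => bool,
where R a x y means x is below y in the a-th preorder.\<close>

definition eq_at :: "('i \<Rightarrow> 'a \<Rightarrow> 'a \<Rightarrow> bool) \<Rightarrow> 'i \<Rightarrow> 'a \<Rightarrow> 'a \<Rightarrow> bool" where
  "eq_at R a x y \<longleftrightarrow> R a x y \<and> R a y x"

definition lt_at :: "('i \<Rightarrow> 'a \<Rightarrow> 'a \<Rightarrow> bool) \<Rightarrow> 'i \<Rightarrow> 'a \<Rightarrow> 'a \<Rightarrow> bool" where
  "lt_at R a x y \<longleftrightarrow> R a x y \<and> \<not> eq_at R a x y"

definition down_cls :: "('i::wellorder \<Rightarrow> 'a \<Rightarrow> 'a \<Rightarrow> bool) \<Rightarrow> 'i \<Rightarrow> 'a \<Rightarrow> 'a set" where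
  "down_cls R a x = {y. \<forall>b<a. eq_at R b x y}"

definition eq_cls :: "('i \<Rightarrow> 'a \<Rightarrow> 'a \<Rightarrow> bool) \<Rightarrow> 'i \<Rightarrow> 'a \<Rightarrow> 'a set" where
  "eq_cls R a x = {y. eq_at R a x y}"

definition is_model :: "('i::wellorder \<Rightarrow> 'a::complete_lattice \<Rightarrow> 'a \<Rightarrow> bool) \<Rightarrow> bool" where
  "is_model R \<longleftrightarrow>
     (\<forall>a. (\<forall>x. R a x x) \<and> (\<forall>x y z. R a x y \<longrightarrow> R a y z \<longrightarrow> R a x z)) \<and>
     (\<forall>a b x y. a < b \<longrightarrow> R b x y \<longrightarrow> eq_at R a x y) \<and>
     (\<forall>x y. (\<forall>a. eq_at R a x y) \<longleftrightarrow> x = y) \<and>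
     (\<forall>x a X. X \<subseteq> down_cls R a x \<longrightarrow>
        (\<exists>y\<in>down_cls R a x. (\<forall>u\<in>X. R a u y) \<and>
           (\<forall>z\<in>down_cls R a x. (\<forall>u\<in>X. R a u z) \<longrightarrow> R a y z \<and> y \<le> z))) \<and>
     (\<forall>X a y. X \<noteq> {} \<longrightarrow> (\<forall>x\<in>X. eq_at R a y x) \<longrightarrow> eq_at R a y (Sup X))"

definition is_limit_type :: "'i::wellorder itself \<Rightarrow> bool" where
  "is_limit_type _ \<longleftrightarrow> (\<forall>a::'i. \<exists>b. a < b)"

text \<open>Successor ordinal a+1 (exists below kappa when kappa is a limit).\<close>
definition osucc :: "'i::wellorder \<Rightarrow> 'i" where
  "osucc a = (LEAST b. a < b)"

definition mono_at :: "('i \<Rightarrow> 'a \<Rightarrow> 'a \<Rightarrow> bool) \<Rightarrow> 'i \<Rightarrow> ('a \<Rightarrow> 'a) \<Rightarrow> bool" where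
  "mono_at R a f \<longleftrightarrow> (\<forall>x y. R a x y \<longrightarrow> R a (f x) (f y))"

end

theory Submission
  imports Defs
begin

theorem mainTheorem3:
  fixes R :: "'i::wellorder \<Rightarrow> 'a::complete_lattice \<Rightarrow> 'a \<Rightarrow> bool"
    and a :: 'i and f :: "'a \<Rightarrow> 'a" and x :: 'a
  assumes "is_model R"
    and "is_limit_type TYPE('i)"
    and "mono_at R a f"
    and "R a x (f x)"
  shows "\<exists>y. (R a x y \<and> eq_at R a y (f y)) \<and>
             (\<forall>z. R a x z \<and> R a (f z) z \<longrightarrow> R a y z) \<and>
             (y \<in> eq_cls R a y \<and> (\<forall>w\<in>eq_cls R a y. y \<le> w)) \<and>
             (\<forall>w\<in>eq_cls R a y. R (osucc a) y w) \<and> R (osucc a) y (f y)"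
proof -
  note M = assms(1)[unfolded is_model_def]
  have refl: "\<And>b u. R b u u" using conjunct1[OF M] by blast
  have trans: "\<And>b u v w. R b u v \<Longrightarrow> R b v w \<Longrightarrow> R b u w"
    using conjunct1[OF M] by blast
  have A1: "\<And>b c u v. b < c \<Longrightarrow> R c u v \<Longrightarrow> eq_at R b u v"
    using conjunct1[OF conjunct2[OF M]] by blast
  have A3: "\<And>u c X. X \<subseteq> down_cls R c u \<Longrightarrow>
        (\<exists>y\<in>down_cls R c u. (\<forall>v\<in>X. R c v y) \<and>
           (\<forall>z\<in>down_cls R c u. (\<forall>v\<in>X. R c v z) \<longrightarrow> R c y z \<and> y \<le> z))"
    using conjunct1[OF conjunct2[OF conjunct2[OF conjunct2[OF M]]]] by blast
  have mono: "\<And>u v. R a u v \<Longrightarrow> R a (f u) (f v)" using assms(3) unfolding mono_at_def by blast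
  have up: "\<And>y. R a x y \<Longrightarrow> y \<in> down_cls R a x"
    unfolding down_cls_def using A1 by blast
  define P where "P = {z. R a x z \<and> R a (f z) z}"
  define X where "X = {u \<in> down_cls R a x. \<forall>z\<in>P. R a u z}"
  obtain y0 where y0: "y0 \<in> down_cls R a x" "\<forall>v\<in>X. R a v y0"
     "\<forall>z\<in>down_cls R a x. (\<forall>v\<in>X. R a v z) \<longrightarrow> R a y0 z \<and> y0 \<le> z"
    using A3[of X a x] unfolding X_def by blast
  have y0P: "\<forall>z\<in>P. R a y0 z"
  proof
    fix z assume "z \<in> P"
    then have "z \<in> down_cls R a x" "\<forall>v\<in>X. R a v z" using up unfolding P_def X_def by auto
    then show "R a y0 z" using y0(3) by blast
  qed
  have xX: "x \<in> X" unfolding X_def P_def using up refl by auto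
  then have xy0: "R a x y0" using y0(2) by blast
  have xfy0: "R a x (f y0)" using trans[OF assms(4) mono[OF xy0]] .
  have "f y0 \<in> X" unfolding X_def using up[OF xfy0]
  proof (auto)
    fix z assume "z \<in> P"
    then have "R a y0 z" "R a (f z) z" using y0P unfolding P_def by auto
    then show "R a (f y0) z" using mono trans by metis
  qed
  then have fy0y0: "R a (f y0) y0" using y0(2) by blast
  have "f y0 \<in> P" unfolding P_def using xfy0 mono[OF fy0y0] by blast
  then have y0fy0: "R a y0 (f y0)" using y0P by blast
  obtain b where "a < b" using assms(2) unfolding is_limit_type_def by blast
  then have asucc: "a < osucc a" unfolding osucc_def by (rule LeastI)
  have below: "\<And>c. c < osucc a \<Longrightarrow> c \<le> a"
    unfolding osucc_def using not_less_Least leI by blast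
  have dc: "\<And>u. down_cls R (osucc a) u = eq_cls R a u"
  proof -
    fix u
    show "down_cls R (osucc a) u = eq_cls R a u"
    proof
      show "down_cls R (osucc a) u \<subseteq> eq_cls R a u"
        unfolding down_cls_def eq_cls_def using asucc by blast
      show "eq_cls R a u \<subseteq> down_cls R (osucc a) u"
      proof
        fix w assume "w \<in> eq_cls R a u"
        then have w: "eq_at R a u w" unfolding eq_cls_def by blast
        have "eq_at R c u w" if "c < osucc a" for c
        proof (cases "c = a")
          case True then show ?thesis using w by simp
        next
          case False then have "c < a" using below[OF that] by simp
          then show ?thesis using A1 w unfolding eq_at_def by blast
        qed
        then show "w \<in> down_cls R (osucc a) u" unfolding down_cls_def by blast
      qed
    qed
  qed
  obtain y where y: "y \<in> eq_cls R a y0"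
     "\<forall>z\<in>eq_cls R a y0. R (osucc a) y z \<and> y \<le> z"
    using A3[of "{}" "osucc a" y0] unfolding dc by blast
  have yy0: "R a y y0" "R a y0 y" using y(1) unfolding eq_cls_def eq_at_def by auto
  have cls: "eq_cls R a y = eq_cls R a y0"
  proof -
    have "eq_at R a y w = eq_at R a y0 w" for w
      unfolding eq_at_def using yy0 trans[of a y y0 w] trans[of a y0 y w]
        trans[of a w y y0] trans[of a w y0 y] by blast
    then show ?thesis unfolding eq_cls_def by auto
  qed
  have fyfy0: "R a (f y) (f y0)" "R a (f y0) (f y)" using yy0 mono by auto
  have eqf: "eq_at R a y (f y)" unfolding eq_at_def
    using trans[OF trans[OF yy0(1) y0fy0] fyfy0(2)] trans[OF trans[OF fyfy0(1) fy0y0] yy0(2)] by blast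
  show ?thesis
  proof (intro exI[of _ y] conjI allI impI ballI)
    show "R a x y" using trans[OF xy0 yy0(2)] .
    show "eq_at R a y (f y)" by (rule eqf)
    fix z assume "R a x z \<and> R a (f z) z"
    then have "z \<in> P" unfolding P_def by blast
    then show "R a y z" using y0P yy0(1) trans by metis
  next
    show "y \<in> eq_cls R a y" unfolding eq_cls_def eq_at_def using refl by blast
  next
    fix w assume "w \<in> eq_cls R a y"
    then show "y \<le> w" using y(2) cls by blast
  next
    fix w assume "w \<in> eq_cls R a y"
    then show "R (osucc a) y w" using y(2) cls by blast
  next
    have "f y \<in> eq_cls R a y" using eqf unfolding eq_cls_def by blast
    then show "R (osucc a) y (f y)" using y(2) cls by blast
  qed
qed

end
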